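(* Let $K_0,\dots,K_n$ be concave kernel functions such that for every $\mathbf{x}\in\mathbb{T}^n$ and $z\in\mathbb{T}$ with $F(\mathbf{x},z)=\overline{m}(\mathbf{x})$ one has $z\ne x_j$ for all $j=0,\dots,n$. For each $j$ let $(K_j^{(k)})_{k\in\mathbb{N}}$ be a sequence of concave kernel functions converging to $K_j$ locally uniformly on $(0,2\pi)$ (i.e. uniformly on every compact subset of $(0,2\pi)$). Then $\overline{m}^{(k)}(\mathbf{x})\to\overline{m}(\mathbf{x})$ uniformly on $\mathbb{T}^n$ as $k\to\infty$.
   Context: Identify the torus $\mathbb{T}=\mathbb{R}/2\pi\mathbb{Z}$ with $[0,2\pi)$. A concave kernel function is a $2\pi$-periodic function $K:\mathbb{R}\to[-\infty,\infty)$ which is real-valued and concave on $(0,2\pi)$ with $\lim_{t\downarrow0}K(t)=\lim_{t\uparrow2\pi}K(t)$ existing in $[-\infty,\infty)$ (this common value being $K(0)$). For $\mathbf{x}=(x_1,\dots,x_n)\in\mathbb{T}^n$ put $x_0=0$, $F(\mathbf{x},t)=K_0(t)+\sum_{j=1}^nK_j(t-x_j)$ and $\overline{m}(\mathbf{x})=\sup_{t\in\mathbb{T}}F(\mathbf{x},t)$; $F^{(k)}$ and $\overline{m}^{(k)}$ are defined in the same way from the kernels $K_0^{(k)},\dots,K_n^{(k)}$. *)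

theory Defs
  imports "HOL-Analysis.Analysis"
begin

definition concave_kernel :: "(real \<Rightarrow> ereal) \<Rightarrow> bool" where
  "concave_kernel K \<longleftrightarrow>
     (\<forall>t. K (t + 2 * pi) = K t) \<and>
     (\<forall>t. K t \<noteq> \<infinity>) \<and>
     (\<forall>t\<in>{0<..<2 * pi}. \<bar>K t\<bar> \<noteq> \<infinity>) \<and>
     concave_on {0<..<2 * pi} (\<lambda>t. real_of_ereal (K t)) \<and>
     (K \<longlongrightarrow> K 0) (at_right 0) \<and>
     (K \<longlongrightarrow> K 0) (at_left (2 * pi))"

definition kF :: "nat \<Rightarrow> (nat \<Rightarrow> real \<Rightarrow> ereal) \<Rightarrow> (nat \<Rightarrow> real) \<Rightarrow> real \<Rightarrow> ereal" where
  "kF n K x t = K 0 t + (\<Sum>j\<in>{1..n}. K j (t - x j))"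

definition mbar :: "nat \<Rightarrow> (nat \<Rightarrow> real \<Rightarrow> ereal) \<Rightarrow> (nat \<Rightarrow> real) \<Rightarrow> ereal" where
  "mbar n K x = (SUP t\<in>{0..<2 * pi}. kF n K x t)"

end

theory Submission
  imports Defs
begin

lemma ck_per: assumes "concave_kernel K" shows "K (t + 2*pi) = K t"
  using assms unfolding concave_kernel_def by auto

lemma ck_per_nat: assumes "concave_kernel K" shows "K (t + 2*pi* real m) = K t"
proof (induction m)
  case 0 then show ?case by simp
next
  case (Suc m)
  have "K (t + 2*pi* real (Suc m)) = K ((t + 2*pi* real m) + 2*pi)" by (simp add: algebra_simps)
  also have "\<dots> = K (t + 2*pi* real m)" by (rule ck_per[OF assms])
  finally show ?case using Suc by simp
qed

lemma ck_per_int: assumes "concave_kernel K" shows "K (t + 2*pi * of_int m) = K t"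
proof (cases "m \<ge> 0")
  case True then obtain k where "m = int k" by (metis nonneg_eq_int)
  then show ?thesis using ck_per_nat[OF assms, of t k] by simp
next
  case False
  define k where "k = nat (-m)"
  have k: "m = - int k" using False by (simp add: k_def)
  have "K ((t + 2*pi * of_int m) + 2*pi* real k) = K (t + 2*pi * of_int m)" by (rule ck_per_nat[OF assms])
  then show ?thesis using k by simp
qed

definition rd :: "real \<Rightarrow> real" where "rd t = t - 2*pi * of_int \<lfloor>t/(2*pi)\<rfloor>"

lemma rd_mem: "rd t \<in> {0..<2*pi}"
proof -
  have a: "of_int \<lfloor>t/(2*pi)\<rfloor> \<le> t/(2*pi)" "t/(2*pi) < of_int \<lfloor>t/(2*pi)\<rfloor> + 1"
    by (simp_all add: of_int_floor_le)
  have "2*pi * of_int \<lfloor>t/(2*pi)\<rfloor> \<le> 2*pi * (t/(2*pi))" using a(1) pi_gt_zero by (intro mult_left_mono) auto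
  then have "2*pi * of_int \<lfloor>t/(2*pi)\<rfloor> \<le> t" by simp
  moreover have "t < 2*pi * of_int \<lfloor>t/(2*pi)\<rfloor> + 2*pi" using a(2) pi_gt_zero by (simp add: field_simps)
  ultimately show ?thesis unfolding rd_def by auto
qed

lemma rd_ge0: "0 \<le> rd t" and rd_lt: "rd t < 2*pi" using rd_mem[of t] by auto

lemma rd_eq: "t = rd t + 2*pi * of_int \<lfloor>t/(2*pi)\<rfloor>" unfolding rd_def by simp

lemma rd_eq': "rd t + 2*pi * of_int \<lfloor>t/(2*pi)\<rfloor> = t" unfolding rd_def by simp

lemma ck_rd: assumes "concave_kernel K" shows "K (rd t) = K t"
  using ck_per_int[OF assms, of "rd t" "\<lfloor>t/(2*pi)\<rfloor>"] rd_eq[of t] by simp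

lemma ck_fin: assumes "concave_kernel K" "t \<in> {0<..<2*pi}" shows "ereal (real_of_ereal (K t)) = K t"
proof -
  have "\<bar>K t\<bar> \<noteq> \<infinity>" using assms unfolding concave_kernel_def by auto
  then show ?thesis by (rule ereal_real')
qed

lemma ck_cont_open: assumes "concave_kernel K" shows "continuous_on {0<..<2*pi} K"
proof -
  have cc: "concave_on {0<..<2*pi} (\<lambda>t. real_of_ereal (K t))" using assms concave_kernel_def by auto
  have "continuous_on {0<..<2*pi} (\<lambda>t. - real_of_ereal (K t))"
    by (rule convex_on_continuous) (use cc in \<open>auto simp: concave_on_def\<close>)
  then have "continuous_on {0<..<2*pi} (\<lambda>t. - (- real_of_ereal (K t)))" by (rule continuous_on_minus)
  then have c: "continuous_on {0<..<2*pi} (\<lambda>t. ereal (real_of_ereal (K t)))" by (intro continuous_on_ereal) simp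
  have "continuous_on {0<..<2*pi} K = continuous_on {0<..<2*pi} (\<lambda>t. ereal (real_of_ereal (K t)))"
    by (rule continuous_on_cong[OF refl]) (simp add: ck_fin[OF assms])
  from this c show ?thesis by (rule iffD2)
qed

lemma ck_isCont_open: assumes "concave_kernel K" "t \<in> {0<..<2*pi}" shows "isCont K t"
proof -
  have "\<forall>x\<in>{0<..<2*pi}. isCont K x"
    using ck_cont_open[OF assms(1)] continuous_on_eq_continuous_at[OF open_greaterThanLessThan] by blast
  then show ?thesis using assms(2) by blast
qed

lemma ck_isCont0: assumes "concave_kernel K" shows "isCont K 0"
proof -
  have r: "(K \<longlongrightarrow> K 0) (at_right 0)" and l2: "(K \<longlongrightarrow> K 0) (at_left (2*pi))"
    using assms unfolding concave_kernel_def by auto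
  have "((\<lambda>x. K (x + 2*pi)) \<longlongrightarrow> K 0) (at_left 0)"
    using l2 unfolding at_left_to_0[of "2*pi"] filterlim_def filtermap_filtermap by simp
  then have l: "(K \<longlongrightarrow> K 0) (at_left 0)" by (simp add: ck_per[OF assms])
  show ?thesis unfolding isCont_def by (rule filterlim_split_at[OF l r])
qed

lemma ck_isCont: assumes "concave_kernel K" shows "isCont K t"
proof -
  define c where "c = 2*pi * of_int \<lfloor>t/(2*pi)\<rfloor>"
  have eq: "(\<lambda>s. K (s - c)) = K"
  proof
    fix s
    have "K ((s - c) + 2*pi * of_int \<lfloor>t/(2*pi)\<rfloor>) = K (s - c)" by (rule ck_per_int[OF assms])
    then show "K (s - c) = K s" by (simp add: c_def)
  qed
  have "isCont K (rd t)"
  proof (cases "rd t = 0")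
    case True then show ?thesis using ck_isCont0[OF assms] by simp
  next
    case False then show ?thesis using rd_mem[of t] by (intro ck_isCont_open[OF assms]) auto
  qed
  moreover have "t - c = rd t" by (simp add: rd_def c_def)
  ultimately have k: "isCont K ((\<lambda>s. s - c) t)" by simp
  have c1: "isCont (\<lambda>s. s - c) t" by (intro continuous_intros)
  have "isCont (\<lambda>s. K (s - c)) t" using isCont_o2[OF c1 k] by simp
  then show ?thesis using eq by simp
qed

lemma ck_cont: assumes "concave_kernel K" shows "continuous_on UNIV K"
  using ck_isCont[OF assms] by (simp add: continuous_at_imp_continuous_on)

lemma ck_bdd: assumes "concave_kernel K" obtains M where "\<And>t. K t \<le> ereal M"
proof -
  have c: "continuous_on {0..2*pi} K" using ck_cont[OF assms] continuous_on_subset by blast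
  have ne0: "{0..2*pi} \<noteq> {}" using pi_gt_zero by simp
  obtain t0 where t0: "\<And>t. t \<in> {0..2*pi} \<Longrightarrow> K t \<le> K t0"
    using continuous_attains_sup[OF compact_Icc ne0 c] by blast
  have ne: "K t0 \<noteq> \<infinity>" using assms unfolding concave_kernel_def by auto
  have h: "K t0 \<le> ereal (real_of_ereal (K t0))" using ne by (cases "K t0") auto
  show ?thesis
  proof (rule that)
    fix t
    have "K t \<le> K t0" using t0[of "rd t"] rd_mem[of t] ck_rd[OF assms, of t] by auto
    also note h
    finally show "K t \<le> ereal (real_of_ereal (K t0))" .
  qed
qed


lemma halving:
  fixes f :: "real \<Rightarrow> real" and \<eta> e M :: real
  assumes "\<eta> > 0" "e > 0" "\<And>t. t \<in> {0<..\<eta>} \<Longrightarrow> f t \<le> M"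
  shows "\<exists>\<delta>. 0 < \<delta> \<and> 2*\<delta> \<le> \<eta> \<and> f \<delta> \<le> f (2*\<delta>) + e"
proof (rule ccontr)
  assume "\<not> ?thesis"
  then have H: "\<And>\<delta>. 0 < \<delta> \<Longrightarrow> 2*\<delta> \<le> \<eta> \<Longrightarrow> f (2*\<delta>) + e < f \<delta>" by force
  have P: "f (\<eta> / 2^m) \<ge> f \<eta> + real m * e" for m
  proof (induction m)
    case 0 then show ?case by simp
  next
    case (Suc m)
    have pos: "0 < \<eta> / 2^(Suc m)" using assms by simp
    have le: "2 * (\<eta> / 2^(Suc m)) \<le> \<eta>"
    proof -
      have "2 * (\<eta> / 2^(Suc m)) = \<eta> / 2^m" by simp
      also have "\<dots> \<le> \<eta>" using assms by (simp add: divide_le_eq)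
      finally show ?thesis .
    qed
    have "f (2 * (\<eta> / 2^(Suc m))) + e < f (\<eta> / 2^(Suc m))" by (rule H[OF pos le])
    moreover have "2 * (\<eta> / 2^(Suc m)) = \<eta> / 2^m" by simp
    ultimately show ?case using Suc by (simp add: algebra_simps)
  qed
  obtain m where m: "M - f \<eta> < real m * e" using ex_less_of_nat_mult[OF assms(2)] by blast
  have "\<eta> / 2^m \<in> {0<..\<eta>}" using assms by (simp add: divide_le_eq)
  then have "f (\<eta> / 2^m) \<le> M" by (rule assms(3))
  with P[of m] m show False by linarith
qed

lemma concave3:
  fixes f :: "real \<Rightarrow> real"
  assumes "concave_on S f" "p \<in> S" "r \<in> S" "p < q" "q < r"
  shows "(r - p) * f q \<ge> (r - q) * f p + (q - p) * f r"
proof -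
  define th where "th = (q - p) / (r - p)"
  have th: "0 \<le> th" "th \<le> 1" using assms by (auto simp: th_def divide_le_eq)
  have q0: "th * (r - p) = q - p" using assms unfolding th_def by simp
  have "(1 - th) *\<^sub>R p + th *\<^sub>R r = p + th * (r - p)" by (simp add: algebra_simps)
  then have q: "(1 - th) *\<^sub>R p + th *\<^sub>R r = q" using q0 by simp
  have "f ((1 - th) *\<^sub>R p + th *\<^sub>R r) \<ge> (1 - th) * f p + th * f r"
    by (rule concave_onD[OF assms(1) th assms(2,3)])
  then have "f q \<ge> (1 - th) * f p + th * f r" using q by simp
  then have "(r - p) * f q \<ge> (r - p) * ((1 - th) * f p + th * f r)" using assms by (intro mult_left_mono) auto
  also have "(r - p) * ((1 - th) * f p + th * f r) = (r-p)*f p - (th*(r-p)) * f p + (th*(r-p)) * f r"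
    by (simp add: algebra_simps)
  also have "\<dots> = (r - q) * f p + (q - p) * f r" unfolding q0 by (simp add: algebra_simps)
  finally show ?thesis by linarith
qed

lemma arith_bound:
  fixes x y z \<delta> w :: real
  assumes "\<delta> > 0" "0 \<le> w" "w \<le> \<delta>" "\<delta> * x \<le> (\<delta> + w) * y - w * z"
  shows "x \<le> y + max 0 (y - z)"
proof -
  have "w * (y - z) \<le> \<delta> * max 0 (y - z)"
  proof (cases "y - z \<ge> 0")
    case True then show ?thesis using assms by (simp add: mult_right_mono)
  next
    case False
    then have "w * (y - z) \<le> 0" using assms by (intro mult_nonneg_nonpos) auto
    then show ?thesis using False by simp
  qed
  then have "\<delta> * x \<le> \<delta> * (y + max 0 (y - z))" using assms(4) by (simp add: algebra_simps)
  then show ?thesis using assms(1) by simp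
qed

lemma left_bound:
  fixes a :: "real \<Rightarrow> real"
  assumes "concave_on {0<..<2*pi} a" "0 < s" "s \<le> \<delta>" "2*\<delta> < 2*pi"
  shows "a s \<le> a \<delta> + max 0 (a \<delta> - a (2*\<delta>))"
proof (cases "s = \<delta>")
  case True then show ?thesis by simp
next
  case False
  then have "s < \<delta>" using assms by simp
  then have "(2*\<delta> - s) * a \<delta> \<ge> (2*\<delta> - \<delta>) * a s + (\<delta> - s) * a (2*\<delta>)"
    using assms by (intro concave3[OF assms(1)]) auto
  then have "\<delta> * a s \<le> (\<delta> + (\<delta> - s)) * a \<delta> - (\<delta> - s) * a (2*\<delta>)" by (simp add: algebra_simps)
  then show ?thesis using assms \<open>s < \<delta>\<close> by (intro arith_bound[of \<delta> "\<delta> - s"]) auto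
qed

lemma right_bound:
  fixes a :: "real \<Rightarrow> real"
  assumes "concave_on {0<..<2*pi} a" "s < 2*pi" "2*pi - \<delta> \<le> s" "0 < \<delta>" "2*\<delta> < 2*pi"
  shows "a s \<le> a (2*pi - \<delta>) + max 0 (a (2*pi - \<delta>) - a (2*pi - 2*\<delta>))"
proof (cases "s = 2*pi - \<delta>")
  case True then show ?thesis by simp
next
  case False
  then have "2*pi - \<delta> < s" using assms by simp
  then have "(s - (2*pi - 2*\<delta>)) * a (2*pi - \<delta>) \<ge> (s - (2*pi - \<delta>)) * a (2*pi - 2*\<delta>) + ((2*pi - \<delta>) - (2*pi - 2*\<delta>)) * a s"
    using assms by (intro concave3[OF assms(1)]) auto
  then have "\<delta> * a s \<le> (\<delta> + (s - (2*pi - \<delta>))) * a (2*pi - \<delta>) - (s - (2*pi - \<delta>)) * a (2*pi - 2*\<delta>)"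
    by (simp add: algebra_simps)
  then show ?thesis using assms \<open>2*pi - \<delta> < s\<close> by (intro arith_bound[of \<delta> "s - (2*pi - \<delta>)"]) auto
qed


lemma ab_arith:
  fixes p q a c e :: real
  assumes "\<bar>p - a\<bar> < e/4" "\<bar>q - c\<bar> < e/4" "a \<le> c + e/4" "0 < e"
  shows "p + max 0 (p - q) \<le> a + e"
proof -
  have "p - a < e/4" "c - q < e/4"
    using abs_less_iff[THEN iffD1, OF assms(1)] abs_less_iff[THEN iffD1, OF assms(2)] by linarith+
  then show ?thesis using assms(3,4) by (cases "p - q \<ge> 0") (simp_all add: max_def)
qed

lemma ck_real_le:
  assumes "concave_kernel K" "K t \<le> ereal M" "t \<in> {0<..<2*pi}"
  shows "real_of_ereal (K t) \<le> M"
proof -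
  have "ereal (real_of_ereal (K t)) \<le> ereal M" using ck_fin[OF assms(1,3)] assms(2) by simp
  then show ?thesis by simp
qed

lemma KC:
  assumes K: "concave_kernel K" and G: "\<And>k. concave_kernel (G k)"
    and conv: "\<And>C. compact C \<Longrightarrow> C \<subseteq> {0<..<2*pi} \<Longrightarrow>
        uniform_limit C (\<lambda>k t. real_of_ereal (G k t)) (\<lambda>t. real_of_ereal (K t)) sequentially"
    and e: "e > 0" and eta: "\<eta> > 0"
  shows "\<forall>\<^sub>F k in sequentially. \<forall>s. \<exists>u. \<bar>u - s\<bar> \<le> \<eta> \<and> G k s \<le> K u + ereal e"
proof -
  define a where "a = (\<lambda>t. real_of_ereal (K t))"
  define b where "b = (\<lambda>k t. real_of_ereal (G k t))"
  obtain M where M: "\<And>t. K t \<le> ereal M" using ck_bdd[OF K] by blast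
  define \<eta>' where "\<eta>' = min \<eta> pi"
  have \<eta>': "0 < \<eta>'" "\<eta>' \<le> \<eta>" "\<eta>' \<le> pi" using eta by (auto simp: \<eta>'_def)
  have aM: "a t \<le> M" if "t \<in> {0<..<2*pi}" for t
    unfolding a_def by (rule ck_real_le[OF K M that])
  have b1: "a t \<le> M" if "t \<in> {0<..\<eta>'}" for t
    using that \<eta>' pi_gt_zero by (intro aM) auto
  obtain \<delta>1 where d1: "0 < \<delta>1" "2*\<delta>1 \<le> \<eta>'" "a \<delta>1 \<le> a (2*\<delta>1) + e/4"
    using halving[of \<eta>' "e/4" a M] \<eta>'(1) b1 e by auto
  have b2: "(\<lambda>t. a (2*pi - t)) t \<le> M" if "t \<in> {0<..\<eta>'}" for t
    using that \<eta>' pi_gt_zero by (intro aM) auto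
  obtain \<delta>2 where d2: "0 < \<delta>2" "2*\<delta>2 \<le> \<eta>'" "a (2*pi - \<delta>2) \<le> a (2*pi - 2*\<delta>2) + e/4"
    using halving[of \<eta>' "e/4" "\<lambda>t. a (2*pi - t)" M] \<eta>'(1) b2 e by auto
  define C where "C = {\<delta>1..2*pi-\<delta>2}"
  have Csub: "C \<subseteq> {0<..<2*pi}" using d1 d2 by (auto simp: C_def)
  have inC: "\<delta>1 \<in> C" "2*\<delta>1 \<in> C" "2*pi-\<delta>2 \<in> C" "2*pi-2*\<delta>2 \<in> C"
    using d1 d2 \<eta>' pi_gt_zero by (auto simp: C_def)
  have U: "\<forall>\<^sub>F k in sequentially. \<forall>t\<in>C. dist (b k t) (a t) < e/4"
    using uniform_limitD[OF conv[OF _ Csub], of "e/4"] e unfolding C_def a_def b_def by auto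
  show ?thesis
    using U
  proof eventually_elim
    case (elim k)
    have Uk: "\<bar>b k t - a t\<bar> < e/4" if "t \<in> C" for t using elim that by (simp add: dist_real_def)
    have bc: "concave_on {0<..<2*pi} (b k)" using G[of k] unfolding b_def concave_kernel_def by auto
    have finG: "G k t = ereal (b k t)" if "t \<in> {0<..<2*pi}" for t
      using ck_fin[OF G that] by (simp add: b_def)
    have finK: "K t = ereal (a t)" if "t \<in> {0<..<2*pi}" for t
      using ck_fin[OF K that] by (simp add: a_def)
    have d1in: "\<delta>1 \<in> {0<..<2*pi}" using Csub inC by auto
    have d2in: "2*pi-\<delta>2 \<in> {0<..<2*pi}" using Csub inC by auto
    have left: "G k t \<le> K \<delta>1 + ereal e" if "t \<in> {0<..<\<delta>1}" for t
    proof -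
      have "b k t \<le> b k \<delta>1 + max 0 (b k \<delta>1 - b k (2*\<delta>1))"
        using that d1 \<eta>' pi_gt_zero by (intro left_bound[OF bc]) auto
      also have "\<dots> \<le> a \<delta>1 + e" using Uk[OF inC(1)] Uk[OF inC(2)] d1 e by (intro ab_arith)
      finally have "b k t \<le> a \<delta>1 + e" .
      moreover have "t \<in> {0<..<2*pi}" using that d1in by auto
      ultimately show ?thesis using finG finK[OF d1in] by simp
    qed
    have main: "\<exists>u. \<bar>u - s0\<bar> \<le> \<eta> \<and> G k s0 \<le> K u + ereal e" if s0: "s0 \<in> {0..<2*pi}" for s0
    proof -
      consider "s0 = 0" | "s0 \<in> {0<..<\<delta>1}" | "s0 \<in> C" | "s0 \<in> {2*pi-\<delta>2<..<2*pi}"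
        using s0 unfolding C_def by force
      then show ?thesis
      proof cases
        case 1
        have lim: "(G k \<longlongrightarrow> G k 0) (at_right 0)" using G[of k] unfolding concave_kernel_def by auto
        have ev: "\<forall>\<^sub>F t in at_right 0. G k t \<le> K \<delta>1 + ereal e"
          using eventually_at_right_real[OF d1(1)] by (rule eventually_mono) (rule left)
        have "G k 0 \<le> K \<delta>1 + ereal e"
          by (rule tendsto_upperbound[OF lim ev]) simp
        moreover have "\<bar>\<delta>1 - s0\<bar> \<le> \<eta>" using 1 d1 \<eta>' by auto
        ultimately show ?thesis using 1 by blast
      next
        case 2
        then show ?thesis using left[OF 2] d1 \<eta>' by (intro exI[of _ \<delta>1]) auto
      next
        case 3
        have "b k s0 \<le> a s0 + e" using abs_less_iff[THEN iffD1, OF Uk[OF 3]] e by linarith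
        moreover have "s0 \<in> {0<..<2*pi}" using 3 Csub by auto
        ultimately have "G k s0 \<le> K s0 + ereal e" using finG finK by simp
        then show ?thesis by (intro exI[of _ s0]) (simp add: eta less_imp_le)
      next
        case 4
        have "b k s0 \<le> b k (2*pi - \<delta>2) + max 0 (b k (2*pi - \<delta>2) - b k (2*pi - 2*\<delta>2))"
          using 4 d2 \<eta>' pi_gt_zero by (intro right_bound[OF bc]) auto
        also have "\<dots> \<le> a (2*pi - \<delta>2) + e" using Uk[OF inC(3)] Uk[OF inC(4)] d2 e by (intro ab_arith)
        finally have "b k s0 \<le> a (2*pi - \<delta>2) + e" .
        moreover have "s0 \<in> {0<..<2*pi}" using 4 d2in by auto
        ultimately have "G k s0 \<le> K (2*pi - \<delta>2) + ereal e" using finG finK[OF d2in] by simp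
        moreover have "\<bar>(2*pi - \<delta>2) - s0\<bar> \<le> \<eta>" using 4 d2 \<eta>' by auto
        ultimately show ?thesis by blast
      qed
    qed
    show ?case
    proof
      fix s
      obtain u0 where u0: "\<bar>u0 - rd s\<bar> \<le> \<eta>" "G k (rd s) \<le> K u0 + ereal e" using main[OF rd_mem] by blast
      define u where "u = u0 + 2*pi * of_int \<lfloor>s/(2*pi)\<rfloor>"
      have "K u = K u0" unfolding u_def by (rule ck_per_int[OF K])
      moreover have "\<bar>u - s\<bar> = \<bar>u0 - rd s\<bar>" unfolding u_def using rd_eq[of s] by (simp add: rd_def)
      moreover have "G k s = G k (rd s)" using ck_rd[OF G] by simp
      ultimately show "\<exists>u. \<bar>u - s\<bar> \<le> \<eta> \<and> G k s \<le> K u + ereal e" using u0 by (intro exI[of _ u]) simp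
    qed
  qed
qed

lemma KL:
  assumes K: "concave_kernel K" and G: "\<And>k. concave_kernel (G k)"
    and conv: "\<And>C. compact C \<Longrightarrow> C \<subseteq> {0<..<2*pi} \<Longrightarrow>
        uniform_limit C (\<lambda>k t. real_of_ereal (G k t)) (\<lambda>t. real_of_ereal (K t)) sequentially"
    and e: "e > 0" and d: "0 < \<delta>"
  shows "\<forall>\<^sub>F k in sequentially. \<forall>s\<in>{\<delta>..2*pi-\<delta>}. K s \<le> G k s + ereal e"
proof -
  have Csub: "{\<delta>..2*pi-\<delta>} \<subseteq> {0<..<2*pi}" using d by auto
  have U: "\<forall>\<^sub>F k in sequentially. \<forall>t\<in>{\<delta>..2*pi-\<delta>}. dist (real_of_ereal (G k t)) (real_of_ereal (K t)) < e"
    using uniform_limitD[OF conv[OF compact_Icc Csub] e] by auto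
  show ?thesis using U
  proof eventually_elim
    case (elim k)
    show ?case
    proof
      fix s assume s: "s \<in> {\<delta>..2*pi-\<delta>}"
      then have s': "s \<in> {0<..<2*pi}" using Csub by auto
      have "\<bar>real_of_ereal (G k s) - real_of_ereal (K s)\<bar> < e" using elim s by (auto simp: dist_real_def)
      then have "real_of_ereal (K s) \<le> real_of_ereal (G k s) + e" using abs_less_iff by linarith
      then show "K s \<le> G k s + ereal e" using ck_fin[OF K s'] ck_fin[OF G s']
        by (metis ereal_less_eq(3) plus_ereal.simps(1))
    qed
  qed
qed


definition yv :: "(nat \<Rightarrow> real) \<Rightarrow> nat \<Rightarrow> real" where
  "yv x j = (if j = 0 then 0 else x j)"

lemma kF_alt: "kF n K x t = (\<Sum>j\<in>{0..n}. K j (t - yv x j))"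
proof -
  have "{0..n} = insert 0 {1..n}" by auto
  then have "(\<Sum>j\<in>{0..n}. K j (t - yv x j)) = K 0 (t - yv x 0) + (\<Sum>j\<in>{1..n}. K j (t - yv x j))"
    by simp
  also have "(\<Sum>j\<in>{1..n}. K j (t - yv x j)) = (\<Sum>j\<in>{1..n}. K j (t - x j))"
    by (rule sum.cong) (auto simp: yv_def)
  finally show ?thesis by (simp add: kF_def yv_def)
qed

lemma tendsto_sum_ereal':
  fixes f :: "'i \<Rightarrow> 'a \<Rightarrow> ereal"
  assumes "finite J" "\<And>j. j \<in> J \<Longrightarrow> (f j \<longlongrightarrow> l j) F" "\<And>j. j \<in> J \<Longrightarrow> l j \<noteq> \<infinity>"
  shows "((\<lambda>z. \<Sum>j\<in>J. f j z) \<longlongrightarrow> (\<Sum>j\<in>J. l j)) F"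
  using assms
proof (induction J rule: finite_induct)
  case empty then show ?case by simp
next
  case (insert a J)
  have ne: "(\<Sum>j\<in>J. l j) \<noteq> \<infinity>" using insert by (simp add: sum_Pinfty)
  have "((\<lambda>z. f a z + (\<Sum>j\<in>J. f j z)) \<longlongrightarrow> l a + (\<Sum>j\<in>J. l j)) F"
    by (rule tendsto_add_ereal_general) (use insert ne in auto)
  then show ?case using insert by simp
qed

lemma coord_cont: "continuous_on UNIV (\<lambda>q::(nat\<Rightarrow>real)\<times>real. yv (fst q) j)"
proof (cases "j = 0")
  case True then show ?thesis by (simp add: yv_def)
next
  case False
  have "continuous_on UNIV (\<lambda>q::(nat\<Rightarrow>real)\<times>real. (\<lambda>x. x j) (fst q))"
    by (rule continuous_on_compose2[OF continuous_on_product_coordinates[of j] continuous_on_fst[OF continuous_on_id]]) auto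
  then show ?thesis using False by (simp add: yv_def)
qed

lemma kF_cont:
  assumes K: "\<And>j. j \<le> n \<Longrightarrow> concave_kernel (K j)"
  shows "continuous_on UNIV (\<lambda>q::(nat\<Rightarrow>real)\<times>real. kF n K (fst q) (snd q))"
proof -
  have "isCont (\<lambda>q::(nat\<Rightarrow>real)\<times>real. kF n K (fst q) (snd q)) p" for p
  proof -
    have inner: "continuous_on UNIV (\<lambda>q::(nat\<Rightarrow>real)\<times>real. snd q - yv (fst q) j)" for j
      by (intro continuous_intros coord_cont)
    have it: "((\<lambda>q. snd q - yv (fst q) j) \<longlongrightarrow> snd p - yv (fst p) j) (at p)" for j
      using inner[of j] continuous_on_eq_continuous_at[OF open_UNIV] unfolding isCont_def by auto
    have "((\<lambda>q. \<Sum>j\<in>{0..n}. K j (snd q - yv (fst q) j)) \<longlongrightarrow> (\<Sum>j\<in>{0..n}. K j (snd p - yv (fst p) j))) (at p)"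
    proof (rule tendsto_sum_ereal')
      fix j assume j: "j \<in> {0..n}"
      show "((\<lambda>q. K j (snd q - yv (fst q) j)) \<longlongrightarrow> K j (snd p - yv (fst p) j)) (at p)"
        by (rule isCont_tendsto_compose[OF ck_isCont[OF K] it]) (use j in auto)
      show "K j (snd p - yv (fst p) j) \<noteq> \<infinity>" using K[of j] j unfolding concave_kernel_def by auto
    qed simp
    then show ?thesis unfolding isCont_def kF_alt by simp
  qed
  then show ?thesis by (simp add: continuous_at_imp_continuous_on)
qed

lemma kF_cont_x:
  assumes K: "\<And>j. j \<le> n \<Longrightarrow> concave_kernel (K j)"
  shows "continuous_on UNIV (\<lambda>x. kF n K x t)"
proof -
  have "continuous_on UNIV (\<lambda>x. (\<lambda>q::(nat\<Rightarrow>real)\<times>real. kF n K (fst q) (snd q)) (x, t))"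
    by (rule continuous_on_compose2[OF kF_cont[OF K]]) (auto intro!: continuous_intros)
  then show ?thesis by simp
qed

lemma kF_cont_t:
  assumes K: "\<And>j. j \<le> n \<Longrightarrow> concave_kernel (K j)"
  shows "continuous_on UNIV (\<lambda>t. kF n K x t)"
proof -
  have "continuous_on UNIV (\<lambda>t. (\<lambda>q::(nat\<Rightarrow>real)\<times>real. kF n K (fst q) (snd q)) (x, t))"
    by (rule continuous_on_compose2[OF kF_cont[OF K]]) (auto intro!: continuous_intros)
  then show ?thesis by simp
qed


lemma kF_per_t:
  assumes K: "\<And>j. j \<le> n \<Longrightarrow> concave_kernel (K j)"
  shows "kF n K x (t + 2*pi * of_int m) = kF n K x t"
  unfolding kF_alt
proof (rule sum.cong)
  fix j assume "j \<in> {0..n}"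
  then have "K j ((t - yv x j) + 2*pi * of_int m) = K j (t - yv x j)" by (intro ck_per_int K) auto
  then show "K j (t + 2*pi * of_int m - yv x j) = K j (t - yv x j)" by (simp add: algebra_simps)
qed simp

lemma kF_shift:
  assumes K: "\<And>j. j \<le> n \<Longrightarrow> concave_kernel (K j)"
    and x': "\<And>j. j \<in> {1..n} \<Longrightarrow> x' j = x j + 2*pi * of_int (m j)"
  shows "kF n K x' t = kF n K x t"
  unfolding kF_def
proof (intro arg_cong2[where f="(+)"] refl sum.cong)
  fix j assume j: "j \<in> {1..n}"
  then have "K j ((t - x' j) + 2*pi * of_int (m j)) = K j (t - x' j)" by (intro ck_per_int K) auto
  then show "K j (t - x' j) = K j (t - x j)" using x'[OF j] by (simp add: algebra_simps)
qed

lemma kF_dep: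
  assumes "\<And>j. j \<in> {1..n} \<Longrightarrow> x' j = x j"
  shows "kF n K x' t = kF n K x t"
  unfolding kF_def using assms by (intro arg_cong2[where f="(+)"] refl sum.cong) auto

lemma mbar_cong:
  assumes "\<And>t. kF n K x' t = kF n K x t"
  shows "mbar n K x' = mbar n K x"
  unfolding mbar_def using assms by simp

lemma kF_le_mbar:
  assumes K: "\<And>j. j \<le> n \<Longrightarrow> concave_kernel (K j)"
  shows "kF n K x t \<le> mbar n K x"
proof -
  have "kF n K x t = kF n K x (rd t + 2*pi * of_int \<lfloor>t/(2*pi)\<rfloor>)" by (simp only: rd_eq')
  also have "\<dots> = kF n K x (rd t)" by (rule kF_per_t[OF K])
  also have "\<dots> \<le> mbar n K x" unfolding mbar_def by (rule SUP_upper[OF rd_mem])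
  finally show ?thesis .
qed

lemma maximizer:
  assumes K: "\<And>j. j \<le> n \<Longrightarrow> concave_kernel (K j)"
  obtains z where "z \<in> {0..<2*pi}" "kF n K x z = mbar n K x"
proof -
  have c: "continuous_on {0..2*pi} (\<lambda>t. kF n K x t)" by (rule continuous_on_subset[OF kF_cont_t[OF K] subset_UNIV])
  have ne0: "{0..2*pi} \<noteq> {}" using pi_gt_zero by simp
  obtain z where z: "z \<in> {0..2*pi}" "\<And>t. t \<in> {0..2*pi} \<Longrightarrow> kF n K x t \<le> kF n K x z"
    using continuous_attains_sup[OF compact_Icc ne0 c] by blast
  have "mbar n K x \<le> kF n K x z" unfolding mbar_def by (rule SUP_least) (use z in auto)
  moreover have "kF n K x z \<le> kF n K x (rd z)"
  proof -
    have "kF n K x z = kF n K x (rd z + 2*pi * of_int \<lfloor>z/(2*pi)\<rfloor>)" by (simp only: rd_eq')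
    also have "\<dots> = kF n K x (rd z)" by (rule kF_per_t[OF K])
    finally show ?thesis by simp
  qed
  moreover have "kF n K x (rd z) \<le> mbar n K x" by (rule kF_le_mbar[OF K])
  ultimately have "kF n K x (rd z) = mbar n K x" by simp
  then show ?thesis using that rd_mem by blast
qed

lemma mbar_bdd:
  assumes K: "\<And>j. j \<le> n \<Longrightarrow> concave_kernel (K j)"
  shows "mbar n K x \<noteq> \<infinity>"
proof -
  have "\<forall>j. \<exists>M. j \<le> n \<longrightarrow> (\<forall>t. K j t \<le> ereal M)" using ck_bdd[OF K] by metis
  then obtain M where M: "\<And>j t. j \<le> n \<Longrightarrow> K j t \<le> ereal (M j)" by metis
  obtain z where z: "kF n K x z = mbar n K x" using maximizer[of n K x, OF K] by metis
  have "kF n K x z \<le> (\<Sum>j\<in>{0..n}. ereal (M j))" unfolding kF_alt by (intro sum_mono M) auto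
  also have "\<dots> = ereal (\<Sum>j\<in>{0..n}. M j)" by simp
  finally show ?thesis using z by auto
qed

lemma rd_shift: "rd (s + 2*pi * of_int m) = rd s"
proof -
  have "(s + 2*pi * of_int m) / (2*pi) = s/(2*pi) + of_int m" by (simp add: field_simps)
  then have "\<lfloor>(s + 2*pi * of_int m) / (2*pi)\<rfloor> = \<lfloor>s/(2*pi)\<rfloor> + m" by simp
  then show ?thesis unfolding rd_def by (simp add: algebra_simps)
qed

lemma sing_small:
  assumes "-2*pi < s" "s < 2*pi" "s \<noteq> 0"
  shows "rd s \<in> {0<..<2*pi}"
proof (cases "s > 0")
  case True
  then have "\<lfloor>s/(2*pi)\<rfloor> = 0" using assms by (simp add: floor_eq_iff divide_less_eq)
  then show ?thesis using True assms by (simp add: rd_def)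
next
  case False
  then have "\<lfloor>s/(2*pi)\<rfloor> = -1" using assms by (simp add: floor_eq_iff divide_less_eq le_divide_eq)
  then show ?thesis using False assms by (simp add: rd_def)
qed

lemma ck_fin_rd:
  assumes K: "concave_kernel K" and "rd s \<noteq> 0"
  shows "K s = ereal (real_of_ereal (K s))"
proof -
  have "rd s \<in> {0<..<2*pi}" using rd_mem[of s] assms(2) by auto
  then show ?thesis using ck_fin[OF K] ck_rd[OF K] by metis
qed


lemma mult_div_aux: "(r::real) \<noteq> 0 \<Longrightarrow> r * (c / r) = c" by simp

lemma cover:
  assumes S: "compact S" and loc: "\<And>p. p \<in> S \<Longrightarrow> \<exists>U. open U \<and> p \<in> U \<and> (\<forall>\<^sub>F i in F. \<forall>q\<in>U. P i q)"
  shows "\<forall>\<^sub>F i in F. \<forall>q\<in>S. P i q"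
proof -
  obtain U where U: "\<And>p. p \<in> S \<Longrightarrow> open (U p) \<and> p \<in> U p \<and> (\<forall>\<^sub>F i in F. \<forall>q\<in>U p. P i q)"
    using loc by metis
  have cov: "S \<subseteq> (\<Union>p\<in>S. U p)" using U by blast
  obtain D where D: "D \<subseteq> S" "finite D" "S \<subseteq> (\<Union>p\<in>D. U p)"
    by (rule compactE_image[OF S, of S U]) (use U cov in auto)
  have "\<forall>\<^sub>F i in F. \<forall>p\<in>D. \<forall>q\<in>U p. P i q"
    using D U by (intro eventually_ball_finite) auto
  then show ?thesis by (rule eventually_mono) (use D in blast)
qed

definition boxf :: "nat set \<Rightarrow> (nat \<Rightarrow> real) \<Rightarrow> (nat \<Rightarrow> real) filter" where
  "boxf J v = (INF r\<in>{0<..}. principal {u. \<forall>j\<in>J. \<bar>u j - v j\<bar> < r})"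

lemma eventually_boxf:
  "eventually P (boxf J v) \<longleftrightarrow> (\<exists>r>0. \<forall>u. (\<forall>j\<in>J. \<bar>u j - v j\<bar> < r) \<longrightarrow> P u)"
proof -
  have "eventually P (boxf J v) \<longleftrightarrow> (\<exists>r\<in>{0<..}. eventually P (principal {u. \<forall>j\<in>J. \<bar>u j - v j\<bar> < (r::real)}))"
    unfolding boxf_def
  proof (rule eventually_INF_base)
    show "{0<..} \<noteq> ({}::real set)" by auto
    fix a b :: real assume "a \<in> {0<..}" "b \<in> {0<..}"
    then show "\<exists>x\<in>{0<..}. principal {u. \<forall>j\<in>J. \<bar>u j - v j\<bar> < x} \<le>
        inf (principal {u. \<forall>j\<in>J. \<bar>u j - v j\<bar> < a}) (principal {u. \<forall>j\<in>J. \<bar>u j - v j\<bar> < b})"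
      by (intro bexI[of _ "min a b"]) (auto simp: inf_principal)
  qed
  then show ?thesis by (auto simp: eventually_principal)
qed

lemma boxf_tendsto: "j \<in> J \<Longrightarrow> ((\<lambda>u. u j) \<longlongrightarrow> v j) (boxf J v)"
  unfolding tendsto_iff eventually_boxf dist_real_def by blast

lemma sum_usc:
  fixes n :: nat and v :: "nat \<Rightarrow> real"
  assumes K: "\<And>j. j \<le> n \<Longrightarrow> concave_kernel (K j)" and C: "(\<Sum>j\<in>{0..n}. K j (v j)) < C"
  shows "\<exists>r>0. \<forall>u. (\<forall>j\<in>{0..n}. \<bar>u j - v j\<bar> < r) \<longrightarrow> (\<Sum>j\<in>{0..n}. K j (u j)) < C"
proof -
  have "((\<lambda>u. \<Sum>j\<in>{0..n}. K j (u j)) \<longlongrightarrow> (\<Sum>j\<in>{0..n}. K j (v j))) (boxf {0..n} v)"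
  proof (rule tendsto_sum_ereal')
    fix j assume j: "j \<in> {0..n}"
    show "((\<lambda>u. K j (u j)) \<longlongrightarrow> K j (v j)) (boxf {0..n} v)"
      by (rule isCont_tendsto_compose[OF ck_isCont[OF K] boxf_tendsto[OF j]]) (use j in auto)
    show "K j (v j) \<noteq> \<infinity>" using K[of j] j unfolding concave_kernel_def by auto
  qed simp
  from order_tendstoD(2)[OF this C] show ?thesis unfolding eventually_boxf .
qed

lemma cont_nhds:
  fixes f :: "'a::t2_space \<Rightarrow> 'b::topological_space"
  assumes "continuous_on UNIV f"
  shows "(f \<longlongrightarrow> f x) (nhds x)"
proof -
  have "isCont f x" using assms continuous_on_eq_continuous_at[OF open_UNIV] by auto
  then show ?thesis unfolding isCont_def tendsto_at_iff_tendsto_nhds .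
qed

lemma yv_cont: "continuous_on UNIV (\<lambda>x::nat\<Rightarrow>real. yv x j)"
  by (cases "j = 0") (auto simp: yv_def)

definition redx :: "(nat \<Rightarrow> real) \<Rightarrow> nat \<Rightarrow> real" where "redx x = (\<lambda>j. rd (x j))"

lemma redx_eq: "redx x j = x j + 2*pi * of_int (- \<lfloor>x j/(2*pi)\<rfloor>)"
  unfolding redx_def rd_def by simp

locale thm_setup =
  fixes n :: nat and K :: "nat \<Rightarrow> real \<Rightarrow> ereal" and Kk :: "nat \<Rightarrow> nat \<Rightarrow> real \<Rightarrow> ereal"
  assumes kern: "\<And>j. j \<le> n \<Longrightarrow> concave_kernel (K j)"
    and kernk: "\<And>k j. j \<le> n \<Longrightarrow> concave_kernel (Kk k j)"
    and nonsing: "\<And>x z. (\<forall>j\<in>{1..n}. x j \<in> {0..<2 * pi}) \<Longrightarrow> z \<in> {0..<2 * pi} \<Longrightarrow>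
        kF n K x z = mbar n K x \<Longrightarrow> z \<noteq> 0 \<and> (\<forall>j\<in>{1..n}. z \<noteq> x j)"
    and conv: "\<And>j C. j \<le> n \<Longrightarrow> compact C \<Longrightarrow> C \<subseteq> {0<..<2 * pi} \<Longrightarrow>
        uniform_limit C (\<lambda>k t. real_of_ereal (Kk k j t)) (\<lambda>t. real_of_ereal (K j t)) sequentially"
begin

lemma kF_rx:
  assumes K': "\<And>j. j \<le> n \<Longrightarrow> concave_kernel (K' j)"
  shows "kF n K' (redx x) t = kF n K' x t"
proof -
  have "\<And>j. j \<in> {1..n} \<Longrightarrow> redx x j = x j + 2*pi * of_int (- \<lfloor>x j/(2*pi)\<rfloor>)" by (rule redx_eq)
  note r = kF_shift[of n K' "redx x" x "\<lambda>j. - \<lfloor>x j/(2*pi)\<rfloor>" t, OF K' this]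
  show ?thesis by (rule r)
qed

lemma mbar_fin: "mbar n K x = ereal (real_of_ereal (mbar n K x))"
proof -
  obtain z where z: "z \<in> {0..<2*pi}" "kF n K (redx x) z = mbar n K (redx x)"
    using maximizer[of n K "redx x", OF kern] by metis
  have ns: "z \<noteq> 0 \<and> (\<forall>j\<in>{1..n}. z \<noteq> redx x j)"
    by (rule nonsing[OF _ z]) (simp add: redx_def rd_ge0 rd_lt)
  have fin: "K j (z - yv (redx x) j) = ereal (real_of_ereal (K j (z - yv (redx x) j)))" if j: "j \<in> {0..n}" for j
  proof (rule ck_fin_rd)
    show "concave_kernel (K j)" using j kern by auto
    have "-2*pi < z - yv (redx x) j" "z - yv (redx x) j < 2*pi" "z - yv (redx x) j \<noteq> 0"
      using z(1) rd_mem[of "x j"] ns j by (auto simp: yv_def redx_def)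
    then show "rd (z - yv (redx x) j) \<noteq> 0" using sing_small by fastforce
  qed
  have "kF n K (redx x) z = (\<Sum>j\<in>{0..n}. ereal (real_of_ereal (K j (z - yv (redx x) j))))"
    unfolding kF_alt using fin by (intro sum.cong) auto
  also have "\<dots> = ereal (\<Sum>j\<in>{0..n}. real_of_ereal (K j (z - yv (redx x) j)))" by simp
  finally have "mbar n K (redx x) = ereal (\<Sum>j\<in>{0..n}. real_of_ereal (K j (z - yv (redx x) j)))" using z by simp
  moreover have "mbar n K (redx x) = mbar n K x" by (rule mbar_cong) (rule kF_rx[OF kern])
  ultimately show ?thesis by simp
qed

lemma lsc:
  assumes "C < mbar n K x0"
  shows "\<forall>\<^sub>F x in nhds x0. C < mbar n K x"
proof -
  obtain t where t: "t \<in> {0..<2*pi}" "C < kF n K x0 t" using assms unfolding mbar_def less_SUP_iff by blast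
  have "\<forall>\<^sub>F x in nhds x0. C < kF n K x t"
    using order_tendstoD(1)[OF cont_nhds[OF kF_cont_x[of n K, OF kern]] t(2)] .
  then show ?thesis by (rule eventually_mono) (rule less_le_trans[OF _ kF_le_mbar[of n K, OF kern]])
qed

lemma usc:
  assumes "mbar n K x0 < C"
  shows "\<forall>\<^sub>F x in nhds x0. mbar n K x \<le> C"
proof -
  have "\<forall>\<^sub>F x in nhds x0. \<forall>t\<in>{0..2*pi}. kF n K x t < C"
  proof (rule cover[OF compact_Icc])
    fix t0 :: real
    have "kF n K x0 t0 < C" using kF_le_mbar[of n K, OF kern] assms by (rule le_less_trans)
    then have "\<forall>\<^sub>F q in nhds (x0, t0). kF n K (fst q) (snd q) < C"
      using order_tendstoD(2)[OF cont_nhds[OF kF_cont[of n K, OF kern]]] by fastforce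
    then obtain Pf Pg where P: "eventually Pf (nhds x0)" "eventually Pg (nhds t0)"
      "\<And>x t. Pf x \<Longrightarrow> Pg t \<Longrightarrow> kF n K x t < C"
      unfolding nhds_prod eventually_prod_filter by auto
    obtain U where U: "open U" "t0 \<in> U" "\<And>t. t \<in> U \<Longrightarrow> Pg t" using P(2) unfolding eventually_nhds by blast
    have "\<forall>\<^sub>F x in nhds x0. \<forall>t\<in>U. kF n K x t < C" using P(1) by (rule eventually_mono) (use P(3) U in blast)
    then show "\<exists>U. open U \<and> t0 \<in> U \<and> (\<forall>\<^sub>F x in nhds x0. \<forall>t\<in>U. kF n K x t < C)" using U by blast
  qed
  then show ?thesis
  proof (rule eventually_mono)
    fix x assume "\<forall>t\<in>{0..2*pi}. kF n K x t < C"
    then show "mbar n K x \<le> C" unfolding mbar_def by (intro SUP_least) (auto intro: less_imp_le)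
  qed
qed

lemma upper_local:
  assumes e: "e > 0"
  shows "\<exists>N. \<forall>\<^sub>F q in nhds (x0, t0). \<forall>k\<ge>N. kF n (Kk k) (fst q) (snd q) \<le> mbar n K (fst q) + ereal e"
proof -
  define m0 where "m0 = real_of_ereal (mbar n K x0)"
  have m0: "mbar n K x0 = ereal m0" using mbar_fin m0_def by simp
  define v where "v = (\<lambda>j. t0 - yv x0 j)"
  have "(\<Sum>j\<in>{0..n}. K j (v j)) = kF n K x0 t0" by (simp add: kF_alt v_def)
  also have "\<dots> \<le> ereal m0" using kF_le_mbar[of n K, OF kern] m0 by metis
  also have "\<dots> < ereal (m0 + e/4)" using e by simp
  finally have vC: "(\<Sum>j\<in>{0..n}. K j (v j)) < ereal (m0 + e/4)" .
  obtain r where r: "r > 0" "\<And>u. (\<forall>j\<in>{0..n}. \<bar>u j - v j\<bar> < r) \<Longrightarrow> (\<Sum>j\<in>{0..n}. K j (u j)) < ereal (m0 + e/4)"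
    using sum_usc[of n K v, OF kern vC] by blast
  define e' where "e' = e / 4 / real (Suc n)"
  have e': "e' > 0" using e by (simp add: e'_def)
  have r2: "r/2 > 0" using r by simp
  have "\<forall>\<^sub>F k in sequentially. \<forall>j\<in>{0..n}. \<forall>s. \<exists>u. \<bar>u - s\<bar> \<le> r/2 \<and> Kk k j s \<le> K j u + ereal e'"
  proof (rule eventually_ball_finite)
    show "finite {0..n}" by simp
    show "\<forall>j\<in>{0..n}. \<forall>\<^sub>F k in sequentially. \<forall>s. \<exists>u. \<bar>u - s\<bar> \<le> r/2 \<and> Kk k j s \<le> K j u + ereal e'"
    proof
      fix j assume j: "j \<in> {0..n}"
      then have jle: "j \<le> n" by simp
      show "\<forall>\<^sub>F k in sequentially. \<forall>s. \<exists>u. \<bar>u - s\<bar> \<le> r/2 \<and> Kk k j s \<le> K j u + ereal e'"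
        by (rule KC[OF kern[OF jle] kernk[OF jle] conv[OF jle] e' r2])
    qed
  qed
  then obtain N where N: "\<And>k. k \<ge> N \<Longrightarrow> \<forall>j\<in>{0..n}. \<forall>s. \<exists>u. \<bar>u - s\<bar> \<le> r/2 \<and> Kk k j s \<le> K j u + ereal e'"
    unfolding eventually_sequentially by blast
  have fl: "filterlim fst (nhds x0) (nhds (x0, t0))"
    using tendsto_fst[OF filterlim_ident, of "(x0, t0)"] by simp
  have lx: "ereal (m0 - e/2) < mbar n K x0" using m0 e by simp
  have ev1: "\<forall>\<^sub>F q in nhds (x0,t0). ereal (m0 - e/2) < mbar n K (fst q)"
    using lsc[OF lx] fl unfolding filterlim_iff by blast
  have ev2: "\<forall>\<^sub>F q in nhds (x0,t0). \<bar>snd q - t0\<bar> < r/4"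
    using tendstoD[OF tendsto_snd[OF filterlim_ident, of "(x0, t0)"], of "r/4"] r by (simp add: dist_real_def)
  have ev3: "\<forall>\<^sub>F q in nhds (x0,t0). \<forall>j\<in>{0..n}. \<bar>yv (fst q) j - yv x0 j\<bar> < r/4"
  proof (rule eventually_ball_finite)
    show "finite {0..n}" by simp
    show "\<forall>j\<in>{0..n}. \<forall>\<^sub>F q in nhds (x0,t0). \<bar>yv (fst q) j - yv x0 j\<bar> < r/4"
    proof
      fix j
      have "((\<lambda>q. yv (fst q) j) \<longlongrightarrow> yv (fst (x0,t0)) j) (nhds (x0,t0))"
        by (rule cont_nhds[OF coord_cont])
      from tendstoD[OF this, of "r/4"] show "\<forall>\<^sub>F q in nhds (x0,t0). \<bar>yv (fst q) j - yv x0 j\<bar> < r/4"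
        using r by (simp add: dist_real_def)
    qed
  qed
  have "\<forall>\<^sub>F q in nhds (x0, t0). \<forall>k\<ge>N. kF n (Kk k) (fst q) (snd q) \<le> mbar n K (fst q) + ereal e"
    using ev1 ev2 ev3
  proof eventually_elim
    case (elim q)
    define x where "x = fst q"
    define t where "t = snd q"
    have q1: "ereal (m0 - e/2) < mbar n K x" and q2: "\<bar>t - t0\<bar> < r/4"
      and q3: "\<And>j. j \<in> {0..n} \<Longrightarrow> \<bar>yv x j - yv x0 j\<bar> < r/4"
      using elim by (auto simp: x_def t_def)
    show ?case
    proof (intro allI impI)
      fix k assume k: "N \<le> k"
      define s where "s = (\<lambda>j. t - yv x j)"
      have "\<forall>j\<in>{0..n}. \<exists>u. \<bar>u - s j\<bar> \<le> r/2 \<and> Kk k j (s j) \<le> K j u + ereal e'"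
      proof
        fix j assume j: "j \<in> {0..n}"
        have "\<forall>s. \<exists>u. \<bar>u - s\<bar> \<le> r/2 \<and> Kk k j s \<le> K j u + ereal e'" using N[OF k] j by (rule bspec)
        then show "\<exists>u. \<bar>u - s j\<bar> \<le> r/2 \<and> Kk k j (s j) \<le> K j u + ereal e'" by (rule spec)
      qed
      from bchoice[OF this] obtain u where u: "\<forall>j\<in>{0..n}. \<bar>u j - s j\<bar> \<le> r/2 \<and> Kk k j (s j) \<le> K j (u j) + ereal e'"
        by blast
      have close: "\<forall>j\<in>{0..n}. \<bar>u j - v j\<bar> < r"
      proof
        fix j assume j: "j \<in> {0..n}"
        have "\<bar>u j - s j\<bar> \<le> r/2" using u j by blast
        moreover have "\<bar>s j - v j\<bar> < r/2" using q2 q3[OF j] unfolding s_def v_def by linarith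
        ultimately show "\<bar>u j - v j\<bar> < r" by linarith
      qed
      have sumu: "(\<Sum>j\<in>{0..n}. K j (u j)) \<le> ereal (m0 + e/4)" using r(2)[OF close] by simp
      have sn: "real (Suc n) \<noteq> 0" by simp
      have "(\<Sum>j\<in>{0..n}. e') = real (Suc n) * (e/4 / real (Suc n))" by (simp add: e'_def)
      also have "\<dots> = e/4" by (rule mult_div_aux[OF sn])
      finally have se: "(\<Sum>j\<in>{0..n}. e') = e/4" .
      have "kF n (Kk k) x t = (\<Sum>j\<in>{0..n}. Kk k j (s j))" by (simp add: kF_alt s_def)
      also have "\<dots> \<le> (\<Sum>j\<in>{0..n}. K j (u j) + ereal e')" using u by (intro sum_mono) blast
      also have "\<dots> = (\<Sum>j\<in>{0..n}. K j (u j)) + ereal (\<Sum>j\<in>{0..n}. e')" by (simp add: sum.distrib)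
      also have "\<dots> \<le> ereal (m0 + e/4) + ereal (e/4)" unfolding se using sumu by (rule add_right_mono)
      also have "\<dots> = ereal (m0 - e/2) + ereal e" by simp
      also have "\<dots> \<le> mbar n K x + ereal e" using q1 by (intro add_right_mono) simp
      finally show "kF n (Kk k) (fst q) (snd q) \<le> mbar n K (fst q) + ereal e" by (simp add: x_def t_def)
    qed
  qed
  then show ?thesis by blast
qed

lemma lower_local:
  assumes e: "e > 0"
  shows "\<exists>N. \<forall>\<^sub>F x in nhds x0. \<forall>k\<ge>N. mbar n K x \<le> mbar n (Kk k) x + ereal e"
proof -
  define m0 where "m0 = real_of_ereal (mbar n K x0)"
  have m0: "mbar n K x0 = ereal m0" using mbar_fin m0_def by simp
  obtain z where z: "z \<in> {0..<2*pi}" "kF n K (redx x0) z = mbar n K (redx x0)"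
    using maximizer[of n K "redx x0", OF kern] by metis
  have ns: "z \<noteq> 0 \<and> (\<forall>j\<in>{1..n}. z \<noteq> redx x0 j)"
    by (rule nonsing[OF _ z]) (simp add: redx_def rd_ge0 rd_lt)
  have mr: "mbar n K (redx x0) = mbar n K x0" by (rule mbar_cong) (rule kF_rx[OF kern])
  have kz: "kF n K x0 z = ereal m0" using kF_rx[of K x0 z, OF kern] z(2) mr m0 by simp
  define w where "w = (\<lambda>j. z - yv x0 j)"
  define om where "om = (\<lambda>j. rd (w j))"
  have om: "om j \<in> {0<..<2*pi}" if j: "j \<in> {0..n}" for j
  proof -
    have "w j = (z - yv (redx x0) j) + 2*pi * of_int (if j = 0 then 0 else - \<lfloor>x0 j/(2*pi)\<rfloor>)"
      by (simp add: w_def yv_def redx_def rd_def)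
    then have "om j = rd (z - yv (redx x0) j)" unfolding om_def by (simp only: rd_shift)
    moreover have "-2*pi < z - yv (redx x0) j" "z - yv (redx x0) j < 2*pi" "z - yv (redx x0) j \<noteq> 0"
      using z(1) rd_mem[of "x0 j"] ns j by (auto simp: yv_def redx_def)
    ultimately show ?thesis using sing_small by simp
  qed
  define dl where "dl = (\<lambda>j. min (om j) (2*pi - om j) / 2)"
  have dl: "0 < dl j" "2 * dl j \<le> om j" "om j + 2 * dl j \<le> 2*pi" if "j \<in> {0..n}" for j
    using om[OF that] by (auto simp: dl_def)
  define e' where "e' = e / 3 / real (Suc n)"
  have e': "e' > 0" using e by (simp add: e'_def)
  have "\<forall>\<^sub>F k in sequentially. \<forall>j\<in>{0..n}. \<forall>s\<in>{dl j..2*pi-dl j}. K j s \<le> Kk k j s + ereal e'"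
  proof (rule eventually_ball_finite)
    show "finite {0..n}" by simp
    show "\<forall>j\<in>{0..n}. \<forall>\<^sub>F k in sequentially. \<forall>s\<in>{dl j..2*pi-dl j}. K j s \<le> Kk k j s + ereal e'"
    proof
      fix j assume j: "j \<in> {0..n}"
      then have jle: "j \<le> n" by simp
      show "\<forall>\<^sub>F k in sequentially. \<forall>s\<in>{dl j..2*pi-dl j}. K j s \<le> Kk k j s + ereal e'"
        by (rule KL[OF kern[OF jle] kernk[OF jle] conv[OF jle] e' dl(1)[OF j]])
    qed
  qed
  then obtain N where N: "\<And>k. k \<ge> N \<Longrightarrow> \<forall>j\<in>{0..n}. \<forall>s\<in>{dl j..2*pi-dl j}. K j s \<le> Kk k j s + ereal e'"
    unfolding eventually_sequentially by blast
  have ev1: "\<forall>\<^sub>F x in nhds x0. \<forall>j\<in>{0..n}. \<bar>yv x j - yv x0 j\<bar> < dl j"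
  proof (rule eventually_ball_finite)
    show "finite {0..n}" by simp
    show "\<forall>j\<in>{0..n}. \<forall>\<^sub>F x in nhds x0. \<bar>yv x j - yv x0 j\<bar> < dl j"
    proof
      fix j assume j: "j \<in> {0..n}"
      have "((\<lambda>x. yv x j) \<longlongrightarrow> yv x0 j) (nhds x0)" by (rule cont_nhds[OF yv_cont])
      from tendstoD[OF this dl(1)[OF j]] show "\<forall>\<^sub>F x in nhds x0. \<bar>yv x j - yv x0 j\<bar> < dl j"
        by (simp add: dist_real_def)
    qed
  qed
  have lt: "ereal (m0 - e/3) < kF n K x0 z" using kz e by simp
  have ev2: "\<forall>\<^sub>F x in nhds x0. ereal (m0 - e/3) < kF n K x z"
    using order_tendstoD(1)[OF cont_nhds[OF kF_cont_x[of n K, OF kern]] lt] .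
  have lt2: "mbar n K x0 < ereal (m0 + e/3)" using m0 e by simp
  have ev3: "\<forall>\<^sub>F x in nhds x0. mbar n K x \<le> ereal (m0 + e/3)" by (rule usc[OF lt2])
  have "\<forall>\<^sub>F x in nhds x0. \<forall>k\<ge>N. mbar n K x \<le> mbar n (Kk k) x + ereal e"
    using ev1 ev2 ev3
  proof eventually_elim
    case (elim x)
    show ?case
    proof (intro allI impI)
      fix k assume k: "N \<le> k"
      define s where "s = (\<lambda>j. z - yv x j)"
      have trm: "K j (s j) \<le> Kk k j (s j) + ereal e'" if j: "j \<in> {0..n}" for j
      proof -
        define c where "c = 2*pi * of_int \<lfloor>w j/(2*pi)\<rfloor>"
        have omc: "om j = w j - c" by (simp add: om_def rd_def c_def)
        have sc: "s j - c = om j + (yv x0 j - yv x j)" using omc by (simp add: s_def w_def)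
        have "\<bar>yv x j - yv x0 j\<bar> < dl j" using elim j by blast
        then have mem: "s j - c \<in> {dl j..2*pi - dl j}" using sc dl[OF j] by auto
        have "K j (s j - c) \<le> Kk k j (s j - c) + ereal e'" using N[OF k] j mem by blast
        moreover have "K j (s j - c) = K j (s j)"
          using ck_per_int[OF kern, of j "s j - c" "\<lfloor>w j/(2*pi)\<rfloor>"] j by (simp add: c_def)
        moreover have "Kk k j (s j - c) = Kk k j (s j)"
          using ck_per_int[OF kernk, of j k "s j - c" "\<lfloor>w j/(2*pi)\<rfloor>"] j by (simp add: c_def)
        ultimately show ?thesis by simp
      qed
      have sn: "real (Suc n) \<noteq> 0" by simp
      have "(\<Sum>j\<in>{0..n}. e') = real (Suc n) * (e/3 / real (Suc n))" by (simp add: e'_def)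
      also have "\<dots> = e/3" by (rule mult_div_aux[OF sn])
      finally have se: "(\<Sum>j\<in>{0..n}. e') = e/3" .
      have "kF n K x z = (\<Sum>j\<in>{0..n}. K j (s j))" by (simp add: kF_alt s_def)
      also have "\<dots> \<le> (\<Sum>j\<in>{0..n}. Kk k j (s j) + ereal e')" using trm by (intro sum_mono) blast
      also have "\<dots> = (\<Sum>j\<in>{0..n}. Kk k j (s j)) + ereal (\<Sum>j\<in>{0..n}. e')" by (simp add: sum.distrib)
      also have "\<dots> = kF n (Kk k) x z + ereal (e/3)" unfolding se by (simp add: kF_alt s_def)
      also have "\<dots> \<le> mbar n (Kk k) x + ereal (e/3)" by (intro add_right_mono kF_le_mbar[of n "Kk k", OF kernk])
      finally have A: "kF n K x z \<le> mbar n (Kk k) x + ereal (e/3)" .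
      have "mbar n K x \<le> ereal (m0 + e/3)" using elim by blast
      also have "\<dots> = ereal (m0 - e/3) + ereal (2*e/3)" by simp
      also have "\<dots> \<le> kF n K x z + ereal (2*e/3)" using elim by (intro add_right_mono) simp
      also have "\<dots> \<le> (mbar n (Kk k) x + ereal (e/3)) + ereal (2*e/3)" using A by (rule add_right_mono)
      also have "\<dots> = mbar n (Kk k) x + ereal e" by (simp add: add.assoc)
      finally show "mbar n K x \<le> mbar n (Kk k) x + ereal e" .
    qed
  qed
  then show ?thesis by blast
qed

lemma main: "\<forall>e>0. \<forall>\<^sub>F k in sequentially. \<forall>x. (\<forall>j\<in>{1..n}. x j \<in> {0..<2 * pi}) \<longrightarrow>
           mbar n (Kk k) x \<le> mbar n K x + ereal e \<and> mbar n K x \<le> mbar n (Kk k) x + ereal e"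
proof (intro allI impI)
  fix e :: real assume e: "e > 0"
  define S where "S = (\<lambda>j::nat. if j \<in> {1..n} then {0..2*pi} else {0::real})"
  define B where "B = Pi UNIV S"
  have cB: "compact B"
  proof -
    have "compactin (product_topology (\<lambda>i. euclidean) UNIV) (PiE UNIV S)"
      by (subst compactin_PiE) (auto simp: S_def)
    then show ?thesis unfolding B_def by (simp add: euclidean_product_topology PiE_UNIV_domain)
  qed
  have up: "\<forall>\<^sub>F k in sequentially. \<forall>q\<in>B \<times> {0..2*pi}. kF n (Kk k) (fst q) (snd q) \<le> mbar n K (fst q) + ereal e"
  proof (rule cover[OF compact_Times[OF cB compact_Icc]])
    fix p :: "(nat \<Rightarrow> real) \<times> real"
    obtain N where N: "\<forall>\<^sub>F q in nhds (fst p, snd p). \<forall>k\<ge>N. kF n (Kk k) (fst q) (snd q) \<le> mbar n K (fst q) + ereal e"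
      using upper_local[OF e, of "fst p" "snd p"] by blast
    then obtain U where U: "open U" "p \<in> U" "\<And>q. q \<in> U \<Longrightarrow> \<forall>k\<ge>N. kF n (Kk k) (fst q) (snd q) \<le> mbar n K (fst q) + ereal e"
      unfolding eventually_nhds by auto
    have "\<forall>\<^sub>F k in sequentially. \<forall>q\<in>U. kF n (Kk k) (fst q) (snd q) \<le> mbar n K (fst q) + ereal e"
      using eventually_ge_at_top[of N] by (rule eventually_mono) (use U in blast)
    then show "\<exists>U. open U \<and> p \<in> U \<and> (\<forall>\<^sub>F k in sequentially. \<forall>q\<in>U. kF n (Kk k) (fst q) (snd q) \<le> mbar n K (fst q) + ereal e)"
      using U by blast
  qed
  have lo: "\<forall>\<^sub>F k in sequentially. \<forall>x\<in>B. mbar n K x \<le> mbar n (Kk k) x + ereal e"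
  proof (rule cover[OF cB])
    fix p :: "nat \<Rightarrow> real"
    obtain N where N: "\<forall>\<^sub>F x in nhds p. \<forall>k\<ge>N. mbar n K x \<le> mbar n (Kk k) x + ereal e"
      using lower_local[OF e, of p] by blast
    then obtain U where U: "open U" "p \<in> U" "\<And>x. x \<in> U \<Longrightarrow> \<forall>k\<ge>N. mbar n K x \<le> mbar n (Kk k) x + ereal e"
      unfolding eventually_nhds by auto
    have "\<forall>\<^sub>F k in sequentially. \<forall>x\<in>U. mbar n K x \<le> mbar n (Kk k) x + ereal e"
      using eventually_ge_at_top[of N] by (rule eventually_mono) (use U in blast)
    then show "\<exists>U. open U \<and> p \<in> U \<and> (\<forall>\<^sub>F k in sequentially. \<forall>x\<in>U. mbar n K x \<le> mbar n (Kk k) x + ereal e)"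
      using U by blast
  qed
  show "\<forall>\<^sub>F k in sequentially. \<forall>x. (\<forall>j\<in>{1..n}. x j \<in> {0..<2 * pi}) \<longrightarrow>
           mbar n (Kk k) x \<le> mbar n K x + ereal e \<and> mbar n K x \<le> mbar n (Kk k) x + ereal e"
    using up lo
  proof eventually_elim
    case (elim k)
    show ?case
    proof (intro allI impI)
      fix x :: "nat \<Rightarrow> real" assume x: "\<forall>j\<in>{1..n}. x j \<in> {0..<2 * pi}"
      define xt where "xt = (\<lambda>j. if j \<in> {1..n} then x j else 0)"
      have xtB: "xt \<in> B" using x by (force simp: B_def S_def xt_def)
      have eqF: "kF n K' xt t = kF n K' x t" for K' t by (rule kF_dep) (simp add: xt_def)
      have eqM: "mbar n K' xt = mbar n K' x" for K' by (rule mbar_cong) (rule eqF)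
      have "mbar n (Kk k) xt \<le> mbar n K xt + ereal e"
        unfolding mbar_def[of n "Kk k"]
      proof (rule SUP_least)
        fix t assume t: "t \<in> {0..<2*pi}"
        then have "(xt, t) \<in> B \<times> {0..2*pi}" using xtB by auto
        from bspec[OF elim(1) this] show "kF n (Kk k) xt t \<le> mbar n K xt + ereal e" by simp
      qed
      moreover have "mbar n K xt \<le> mbar n (Kk k) xt + ereal e" using bspec[OF elim(2) xtB] .
      ultimately show "mbar n (Kk k) x \<le> mbar n K x + ereal e \<and> mbar n K x \<le> mbar n (Kk k) x + ereal e"
        using eqM by simp
    qed
  qed
qed

end

theorem theorem4p7:
  fixes n :: nat
    and K :: "nat \<Rightarrow> real \<Rightarrow> ereal"
    and Kk :: "nat \<Rightarrow> nat \<Rightarrow> real \<Rightarrow> ereal"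
  assumes kern: "\<And>j. j \<le> n \<Longrightarrow> concave_kernel (K j)"
    and kernk: "\<And>k j. j \<le> n \<Longrightarrow> concave_kernel (Kk k j)"
    and nonsing: "\<And>x z. (\<forall>j\<in>{1..n}. x j \<in> {0..<2 * pi}) \<Longrightarrow> z \<in> {0..<2 * pi} \<Longrightarrow>
        kF n K x z = mbar n K x \<Longrightarrow> z \<noteq> 0 \<and> (\<forall>j\<in>{1..n}. z \<noteq> x j)"
    and conv: "\<And>j C. j \<le> n \<Longrightarrow> compact C \<Longrightarrow> C \<subseteq> {0<..<2 * pi} \<Longrightarrow>
        uniform_limit C (\<lambda>k t. real_of_ereal (Kk k j t)) (\<lambda>t. real_of_ereal (K j t)) sequentially"
  shows "\<forall>e>0. \<forall>\<^sub>F k in sequentially. \<forall>x. (\<forall>j\<in>{1..n}. x j \<in> {0..<2 * pi}) \<longrightarrow>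
           mbar n (Kk k) x \<le> mbar n K x + ereal e \<and> mbar n K x \<le> mbar n (Kk k) x + ereal e"
proof -
  have S: "thm_setup n K Kk" by (rule thm_setup.intro[OF kern kernk nonsing conv])
  show ?thesis by (rule thm_setup.main[OF S])
qed

end
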